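(* Let $Q$ be a commutative Moufang loop with multiplication group $\mathfrak M$. Then the center $Z(\mathfrak M)$ of $\mathfrak M$ is exactly $\{L(a): a\in Z(Q)\}$, and the map $a\mapsto L(a)$ is an isomorphism from $Z(Q)$ onto $Z(\mathfrak M)$.
   Context: A commutative Moufang loop is a commutative loop $(Q,\cdot)$ with identity $1$ satisfying $x^2\cdot yz=xy\cdot xz$. The translation $L(x)$ is $y\mapsto xy$; $\mathfrak M$ is the permutation group of $Q$ generated by all $L(x)$. The center of $Q$ is $Z(Q)=\{x\in Q: x\cdot yz=xy\cdot z\ \forall y,z\in Q\}$. *)

theory Defs
  imports "HOL-Algebra.Algebra"
begin

definition loop :: "'a set \<Rightarrow> ('a \<Rightarrow> 'a \<Rightarrow> 'a) \<Rightarrow> 'a \<Rightarrow> bool" where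
  "loop Q m e \<longleftrightarrow>
     e \<in> Q \<and> (\<forall>x\<in>Q. \<forall>y\<in>Q. m x y \<in> Q) \<and>
     (\<forall>x\<in>Q. m e x = x \<and> m x e = x) \<and>
     (\<forall>a\<in>Q. \<forall>b\<in>Q. (\<exists>!x. x \<in> Q \<and> m a x = b) \<and> (\<exists>!y. y \<in> Q \<and> m y a = b))"

definition comm_moufang_loop :: "'a set \<Rightarrow> ('a \<Rightarrow> 'a \<Rightarrow> 'a) \<Rightarrow> 'a \<Rightarrow> bool" where
  "comm_moufang_loop Q m e \<longleftrightarrow>
     loop Q m e \<and> (\<forall>x\<in>Q. \<forall>y\<in>Q. m x y = m y x) \<and>
     (\<forall>x\<in>Q. \<forall>y\<in>Q. \<forall>z\<in>Q. m (m x x) (m y z) = m (m x y) (m x z))"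

definition Ltr :: "'a set \<Rightarrow> ('a \<Rightarrow> 'a \<Rightarrow> 'a) \<Rightarrow> 'a \<Rightarrow> ('a \<Rightarrow> 'a)" where
  "Ltr Q m x = (\<lambda>y\<in>Q. m x y)"

definition mult_group :: "'a set \<Rightarrow> ('a \<Rightarrow> 'a \<Rightarrow> 'a) \<Rightarrow> ('a \<Rightarrow> 'a) monoid" where
  "mult_group Q m = (BijGroup Q)\<lparr>carrier := generate (BijGroup Q) (Ltr Q m ` Q)\<rparr>"

definition loop_center :: "'a set \<Rightarrow> ('a \<Rightarrow> 'a \<Rightarrow> 'a) \<Rightarrow> 'a set" where
  "loop_center Q m = {x \<in> Q. \<forall>y\<in>Q. \<forall>z\<in>Q. m x (m y z) = m (m x y) z}"

definition loop_center_struct :: "'a set \<Rightarrow> ('a \<Rightarrow> 'a \<Rightarrow> 'a) \<Rightarrow> 'a \<Rightarrow> 'a monoid" where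
  "loop_center_struct Q m e = \<lparr>carrier = loop_center Q m, monoid.mult = m, one = e\<rparr>"

definition group_center :: "('g, 'b) monoid_scheme \<Rightarrow> 'g set" where
  "group_center G = {g \<in> carrier G. \<forall>h\<in>carrier G. g \<otimes>\<^bsub>G\<^esub> h = h \<otimes>\<^bsub>G\<^esub> g}"

end

theory Submission
  imports Defs
begin

lemma (in group) centr_subgroup:
  assumes c: "c \<in> carrier G"
  shows "subgroup {h \<in> carrier G. c \<otimes> h = h \<otimes> c} G"
proof (rule subgroupI)
  fix h assume "h \<in> {h \<in> carrier G. c \<otimes> h = h \<otimes> c}"
  then have h: "h \<in> carrier G" and e: "c \<otimes> h = h \<otimes> c" by auto
  have "inv h \<otimes> c = inv h \<otimes> c \<otimes> (h \<otimes> inv h)" using h c by simp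
  also have "\<dots> = inv h \<otimes> (c \<otimes> h) \<otimes> inv h" using h c by (simp add: m_assoc)
  also have "\<dots> = inv h \<otimes> (h \<otimes> c) \<otimes> inv h" using e by simp
  also have "\<dots> = c \<otimes> inv h" using h c by (simp add: m_assoc[symmetric])
  finally show "inv h \<in> {h \<in> carrier G. c \<otimes> h = h \<otimes> c}" using h by simp
next
  fix h k assume "h \<in> {h \<in> carrier G. c \<otimes> h = h \<otimes> c}" "k \<in> {h \<in> carrier G. c \<otimes> h = h \<otimes> c}"
  then have h: "h \<in> carrier G" "c \<otimes> h = h \<otimes> c" and k: "k \<in> carrier G" "c \<otimes> k = k \<otimes> c" by auto
  have "c \<otimes> (h \<otimes> k) = h \<otimes> c \<otimes> k" using h k c by (simp add: m_assoc[symmetric])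
  also have "\<dots> = h \<otimes> k \<otimes> c" using h k c by (simp add: m_assoc)
  finally show "h \<otimes> k \<in> {h \<in> carrier G. c \<otimes> h = h \<otimes> c}" using h k by simp
qed (use c in auto)

lemma Ltr_Bij:
  assumes "loop Q m e" "a \<in> Q"
  shows "Ltr Q m a \<in> Bij Q"
proof -
  have cl: "\<And>x. x \<in> Q \<Longrightarrow> m a x \<in> Q" using assms unfolding loop_def by auto
  have u: "\<And>b. b \<in> Q \<Longrightarrow> \<exists>!x. x \<in> Q \<and> m a x = b" using assms unfolding loop_def by auto
  have "inj_on (m a) Q"
  proof (rule inj_onI)
    fix x y assume "x \<in> Q" "y \<in> Q" "m a x = m a y"
    with u[OF cl[OF \<open>y \<in> Q\<close>]] show "x = y" by blast
  qed
  moreover have "m a ` Q = Q" using cl u by blast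
  ultimately have "bij_betw (m a) Q Q" by (simp add: bij_betw_def)
  then have "bij_betw (Ltr Q m a) Q Q" unfolding Ltr_def
    by (rule bij_betw_cong[THEN iffD1, rotated]) simp
  then show ?thesis unfolding Bij_def Ltr_def by auto
qed

theorem mainTheorem6:
  assumes "comm_moufang_loop Q m e"
  shows "group_center (mult_group Q m) = Ltr Q m ` loop_center Q m
       \<and> Ltr Q m \<in> iso (loop_center_struct Q m e)
                       ((mult_group Q m)\<lparr>carrier := group_center (mult_group Q m)\<rparr>)"
proof -
  interpret G: group "BijGroup Q" by (rule group_BijGroup)
  have lp: "loop Q m e" using assms unfolding comm_moufang_loop_def by auto
  have cl: "\<And>x y. x \<in> Q \<Longrightarrow> y \<in> Q \<Longrightarrow> m x y \<in> Q" using lp unfolding loop_def by auto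
  have eQ: "e \<in> Q" using lp unfolding loop_def by auto
  have id: "\<And>x. x \<in> Q \<Longrightarrow> m x e = x" using lp unfolding loop_def by auto
  have cm: "\<And>x y. x \<in> Q \<Longrightarrow> y \<in> Q \<Longrightarrow> m x y = m y x"
    using assms unfolding comm_moufang_loop_def by auto
  define S where "S = Ltr Q m ` Q"
  have SB: "S \<subseteq> Bij Q" using Ltr_Bij[OF lp] S_def by auto
  have genB: "generate (BijGroup Q) S \<subseteq> Bij Q"
    using G.generate_incl[of S] SB by (simp add: BijGroup_def)
  have mult: "\<And>f g. f \<in> Bij Q \<Longrightarrow> g \<in> Bij Q \<Longrightarrow> f \<otimes>\<^bsub>BijGroup Q\<^esub> g = compose Q f g"
    by (simp add: BijGroup_def)
  have GC: "group_center (mult_group Q m) =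
     {g \<in> generate (BijGroup Q) S. \<forall>h\<in>generate (BijGroup Q) S. g \<otimes>\<^bsub>BijGroup Q\<^esub> h = h \<otimes>\<^bsub>BijGroup Q\<^esub> g}"
    unfolding group_center_def mult_group_def S_def by simp
  have Lc: "Ltr Q m a \<in> group_center (mult_group Q m)" if a: "a \<in> loop_center Q m" for a
  proof -
    have aQ: "a \<in> Q" and as: "\<And>y z. y \<in> Q \<Longrightarrow> z \<in> Q \<Longrightarrow> m a (m y z) = m (m a y) z"
      using a unfolding loop_center_def by auto
    have sw: "m x (m a y) = m a (m x y)" if "x \<in> Q" "y \<in> Q" for x y
      using that aQ cl cm as by metis
    have LaB: "Ltr Q m a \<in> carrier (BijGroup Q)" using Ltr_Bij[OF lp aQ] by (simp add: BijGroup_def)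
    have "S \<subseteq> {h \<in> carrier (BijGroup Q). Ltr Q m a \<otimes>\<^bsub>BijGroup Q\<^esub> h = h \<otimes>\<^bsub>BijGroup Q\<^esub> Ltr Q m a}"
    proof
      fix h assume "h \<in> S"
      then obtain x where x: "x \<in> Q" "h = Ltr Q m x" using S_def by auto
      have hB: "h \<in> Bij Q" using SB \<open>h \<in> S\<close> by auto
      have "compose Q (Ltr Q m a) h = compose Q h (Ltr Q m a)"
        unfolding compose_def x Ltr_def using x aQ cl sw by (auto intro!: ext)
      then show "h \<in> {h \<in> carrier (BijGroup Q). Ltr Q m a \<otimes>\<^bsub>BijGroup Q\<^esub> h = h \<otimes>\<^bsub>BijGroup Q\<^esub> Ltr Q m a}"
        using hB Ltr_Bij[OF lp aQ] mult by (simp add: BijGroup_def)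
    qed
    then have "generate (BijGroup Q) S \<subseteq> {h \<in> carrier (BijGroup Q). Ltr Q m a \<otimes>\<^bsub>BijGroup Q\<^esub> h = h \<otimes>\<^bsub>BijGroup Q\<^esub> Ltr Q m a}"
      using G.generate_subgroup_incl G.centr_subgroup[OF LaB] by blast
    moreover have "Ltr Q m a \<in> generate (BijGroup Q) S" using aQ S_def by (auto intro: generate.incl)
    ultimately show ?thesis unfolding GC by auto
  qed
  have Cl: "\<phi> \<in> Ltr Q m ` loop_center Q m" if p: "\<phi> \<in> group_center (mult_group Q m)" for \<phi>
  proof -
    have pg: "\<phi> \<in> generate (BijGroup Q) S" and pc: "\<And>h. h \<in> generate (BijGroup Q) S \<Longrightarrow>
       \<phi> \<otimes>\<^bsub>BijGroup Q\<^esub> h = h \<otimes>\<^bsub>BijGroup Q\<^esub> \<phi>" using p unfolding GC by auto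
    have pB: "\<phi> \<in> Bij Q" using pg genB by auto
    have pQ: "\<And>y. y \<in> Q \<Longrightarrow> \<phi> y \<in> Q" using Bij_imp_funcset[OF pB] by auto
    have com: "\<phi> (m x y) = m x (\<phi> y)" if "x \<in> Q" "y \<in> Q" for x y
    proof -
      have "Ltr Q m x \<in> generate (BijGroup Q) S" using that S_def by (auto intro: generate.incl)
      then have "compose Q \<phi> (Ltr Q m x) = compose Q (Ltr Q m x) \<phi>"
        using pc mult pB Ltr_Bij[OF lp that(1)] by metis
      then have "compose Q \<phi> (Ltr Q m x) y = compose Q (Ltr Q m x) \<phi> y" by simp
      then show ?thesis using that pQ unfolding compose_def Ltr_def by simp
    qed
    define a where "a = \<phi> e"
    have aQ: "a \<in> Q" using pQ eQ a_def by simp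
    have pv: "\<phi> y = m a y" if "y \<in> Q" for y
      using com[OF that eQ] id[OF that] cm[OF that aQ] a_def by simp
    have peq: "\<phi> = Ltr Q m a"
    proof
      fix y show "\<phi> y = Ltr Q m a y"
        using pv Bij_imp_extensional[OF pB] unfolding Ltr_def
        by (cases "y \<in> Q") (auto simp: extensional_def)
    qed
    have "a \<in> loop_center Q m" unfolding loop_center_def
    proof (intro CollectI conjI ballI aQ)
      fix y z assume y: "y \<in> Q" and z: "z \<in> Q"
      have "m a (m y z) = m a (m z y)" using cm y z by simp
      also have "\<dots> = m z (m a y)" using com[OF z y] pv y z cl by simp
      also have "\<dots> = m (m a y) z" using cm y z aQ cl by simp
      finally show "m a (m y z) = m (m a y) z" .
    qed
    then show ?thesis using peq by auto
  qed
  have eqC: "group_center (mult_group Q m) = Ltr Q m ` loop_center Q m" using Lc Cl by blast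
  have inj: "inj_on (Ltr Q m) (loop_center Q m)"
  proof (rule inj_onI)
    fix a b assume "a \<in> loop_center Q m" "b \<in> loop_center Q m" "Ltr Q m a = Ltr Q m b"
    then have "Ltr Q m a e = Ltr Q m b e" by simp
    then show "a = b" using eQ id \<open>a \<in> loop_center Q m\<close> \<open>b \<in> loop_center Q m\<close>
      unfolding Ltr_def loop_center_def by auto
  qed
  have hom: "Ltr Q m (m x y) = Ltr Q m x \<otimes>\<^bsub>BijGroup Q\<^esub> Ltr Q m y"
    if x: "x \<in> loop_center Q m" and y: "y \<in> loop_center Q m" for x y
  proof -
    have xQ: "x \<in> Q" and yQ: "y \<in> Q" using x y unfolding loop_center_def by auto
    have as: "\<And>u v. u \<in> Q \<Longrightarrow> v \<in> Q \<Longrightarrow> m x (m u v) = m (m x u) v"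
      using x unfolding loop_center_def by auto
    have "Ltr Q m x \<otimes>\<^bsub>BijGroup Q\<^esub> Ltr Q m y = compose Q (Ltr Q m x) (Ltr Q m y)"
      using mult Ltr_Bij[OF lp xQ] Ltr_Bij[OF lp yQ] by simp
    also have "\<dots> = Ltr Q m (m x y)"
      unfolding compose_def Ltr_def using cl xQ yQ as by (auto intro!: ext)
    finally show ?thesis by simp
  qed
  have "Ltr Q m \<in> iso (loop_center_struct Q m e)
                       ((mult_group Q m)\<lparr>carrier := group_center (mult_group Q m)\<rparr>)"
    unfolding iso_def hom_def
    using eqC inj hom by (auto simp: loop_center_struct_def mult_group_def bij_betw_def)
  with eqC show ?thesis by simp
qed

end
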